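(* Let $d\ge1$, $n\ge2$, $N\ge1$, $L>0$, $h=L/N$, $\Delta t>0$, and let $b_{ij}>0$ with $b_{ij}=b_{ji}$ for $i\neq j$. Let $\rho^k$ be an $n$-tuple of cell-centered grid functions on the $d$-dimensional periodic grid with $\rho^k_{i,\ell}>0$ and $\sum_{i=1}^n\rho^k_{i,\ell}=1$ for all $i,\ell$. Then there exists $\delta_0>0$ such that for every $0<\delta\le\delta_0$: a cell-centered $n$-tuple $\rho^{k+1}$ with $\rho^{k+1}_{i,\ell}>0$ for all $i,\ell$ is a solution of the scheme (i.e. there is an edge-centered $n$-tuple $v^{k+1}$ with, for $i=1,\dots,n$, $$\frac{\rho^{k+1}_i-\rho^k_i}{\Delta t}+d_h(\hat\rho^k_iv^{k+1}_i)=0\ \text{at cell points},\quad -\sum_{j=1}^nb_{ij}\hat\rho^k_j(v^{k+1}_i-v^{k+1}_j)=D_h\log\rho^{k+1}_i-\frac{\sum_{j=1}^n\hat\rho^k_jD_h\log\rho^{k+1}_j}{\sum_{j=1}^n\hat\rho^k_j},\quad\sum_{j=1}^n\hat\rho^k_jv^{k+1}_j=0\ \text{at edge points})$$ if and only if $\rho^{k+1}$ is the $\rho$-component of a minimizer over $K_\delta$ of $$J(\rho,w)=\frac{1}{4\Delta t}\,h^d\sum_{\text{edge points }e}\sum_{i,j=1}^nb_{ij}\hat\rho^k_{i,e}\hat\rho^k_{j,e}(w_{i,e}-w_{j,e})^2+h^d\sum_{\ell\in\{1,\dots,N\}^d}\sum_{i=1}^n\rho_{i,\ell}\log\rho_{i,\ell},$$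 where $K_\delta$ is the set of pairs $(\rho,w)$, $\rho$ a cell-centered and $w$ an edge-centered $n$-tuple, with $\rho_{i,\ell}\ge\delta$, $\rho_{i,\ell}-\rho^k_{i,\ell}+(d_h(\hat\rho^k_iw_i))_\ell=0$, $\sum_{i=1}^n\rho_{i,\ell}=1$ for all $i$ and $\ell\in\{1,\dots,N\}^d$, and $\sum_{i=1}^n\hat\rho^k_{i,e}w_{i,e}=0$ at every edge point $e$.
   Context: Multidimensional periodic grid: cell points $\ell=(\ell_1,\dots,\ell_d)\in\mathbb Z^d$ modulo $N$ in each coordinate; edge points $\ell+\frac12e_s$, $s=1,\dots,d$, $N$-periodic. $(D_hf)_{\ell+\frac12e_s}=(f_{\ell+e_s}-f_\ell)/h$; $(d_h\phi)_\ell=\sum_{s=1}^d(\phi_{\ell+\frac12e_s}-\phi_{\ell-\frac12e_s})/h$; $\hat f_{\ell+\frac12e_s}=(f_\ell+f_{\ell+e_s})/2$. Products and logarithms are pointwise; terms with $i=j$ vanish so $b_{ii}$ is irrelevant. *)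

theory Defs
  imports Main Complex_Main
begin

text \<open>A cell point is
  represented by its coordinate vector l :: nat => nat with l s < N for s < d and
  l s = 0 for s >= d (coordinates taken modulo N, indexed 0..N-1).
  An edge point l + 1/2 e_s is represented by the pair (l, s) with s < d.\<close>

type_synonym cell = "nat \<Rightarrow> nat"
type_synonym edge = "cell \<times> nat"

definition cells :: "nat \<Rightarrow> nat \<Rightarrow> cell set" where
  "cells d N = {l. (\<forall>s<d. l s < N) \<and> (\<forall>s\<ge>d. l s = 0)}"

definition edges :: "nat \<Rightarrow> nat \<Rightarrow> edge set" where
  "edges d N = cells d N \<times> {..<d}"

definition shiftp :: "nat \<Rightarrow> cell \<Rightarrow> nat \<Rightarrow> cell" where
  "shiftp N l s = l(s := (l s + 1) mod N)"

definition shiftm :: "nat \<Rightarrow> cell \<Rightarrow> nat \<Rightarrow> cell" where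
  "shiftm N l s = l(s := (l s + N - 1) mod N)"

definition Dh :: "nat \<Rightarrow> real \<Rightarrow> (cell \<Rightarrow> real) \<Rightarrow> edge \<Rightarrow> real" where
  "Dh N h f e = (f (shiftp N (fst e) (snd e)) - f (fst e)) / h"

definition dh :: "nat \<Rightarrow> nat \<Rightarrow> real \<Rightarrow> (edge \<Rightarrow> real) \<Rightarrow> cell \<Rightarrow> real" where
  "dh d N h \<phi> l = (\<Sum>s<d. (\<phi> (l, s) - \<phi> (shiftm N l s, s)) / h)"

definition hat :: "nat \<Rightarrow> (cell \<Rightarrow> real) \<Rightarrow> edge \<Rightarrow> real" where
  "hat N f e = (f (fst e) + f (shiftp N (fst e) (snd e))) / 2"

text \<open>Species are indexed by i in {1..n}. rho0 = rho^k, rho1 = rho^{k+1}.\<close>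

definition is_scheme_solution ::
  "nat \<Rightarrow> nat \<Rightarrow> nat \<Rightarrow> real \<Rightarrow> real \<Rightarrow> (nat \<Rightarrow> nat \<Rightarrow> real)
   \<Rightarrow> (nat \<Rightarrow> cell \<Rightarrow> real) \<Rightarrow> (nat \<Rightarrow> cell \<Rightarrow> real) \<Rightarrow> bool" where
  "is_scheme_solution d N n h dt b rho0 rho1 \<longleftrightarrow>
     (\<exists>v :: nat \<Rightarrow> edge \<Rightarrow> real.
        (\<forall>i\<in>{1..n}. \<forall>l\<in>cells d N.
            (rho1 i l - rho0 i l) / dt + dh d N h (\<lambda>e. hat N (rho0 i) e * v i e) l = 0) \<and>
        (\<forall>i\<in>{1..n}. \<forall>e\<in>edges d N.
            - (\<Sum>j=1..n. b i j * hat N (rho0 j) e * (v i e - v j e))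
            = Dh N h (\<lambda>l. ln (rho1 i l)) e
              - (\<Sum>j=1..n. hat N (rho0 j) e * Dh N h (\<lambda>l. ln (rho1 j l)) e)
                / (\<Sum>j=1..n. hat N (rho0 j) e)) \<and>
        (\<forall>e\<in>edges d N. (\<Sum>j=1..n. hat N (rho0 j) e * v j e) = 0))"

definition Jfun ::
  "nat \<Rightarrow> nat \<Rightarrow> nat \<Rightarrow> real \<Rightarrow> real \<Rightarrow> (nat \<Rightarrow> nat \<Rightarrow> real)
   \<Rightarrow> (nat \<Rightarrow> cell \<Rightarrow> real) \<Rightarrow> (nat \<Rightarrow> cell \<Rightarrow> real) \<Rightarrow> (nat \<Rightarrow> edge \<Rightarrow> real) \<Rightarrow> real" where
  "Jfun d N n h dt b rho0 rho w =
     1 / (4 * dt) * h ^ d * (\<Sum>e\<in>edges d N. \<Sum>i=1..n. \<Sum>j=1..n.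
         b i j * hat N (rho0 i) e * hat N (rho0 j) e * (w i e - w j e)\<^sup>2)
     + h ^ d * (\<Sum>l\<in>cells d N. \<Sum>i=1..n. rho i l * ln (rho i l))"

definition Kset ::
  "nat \<Rightarrow> nat \<Rightarrow> nat \<Rightarrow> real \<Rightarrow> real \<Rightarrow> (nat \<Rightarrow> cell \<Rightarrow> real)
   \<Rightarrow> ((nat \<Rightarrow> cell \<Rightarrow> real) \<times> (nat \<Rightarrow> edge \<Rightarrow> real)) set" where
  "Kset d N n h \<delta> rho0 =
     {(rho, w). (\<forall>i\<in>{1..n}. \<forall>l\<in>cells d N.
                   rho i l \<ge> \<delta> \<and>
                   rho i l - rho0 i l + dh d N h (\<lambda>e. hat N (rho0 i) e * w i e) l = 0) \<and>
                (\<forall>l\<in>cells d N. (\<Sum>i=1..n. rho i l) = 1) \<and>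
                (\<forall>e\<in>edges d N. (\<Sum>i=1..n. hat N (rho0 i) e * w i e) = 0)}"

definition is_min_rho_component ::
  "nat \<Rightarrow> nat \<Rightarrow> nat \<Rightarrow> real \<Rightarrow> real \<Rightarrow> (nat \<Rightarrow> nat \<Rightarrow> real) \<Rightarrow> real
   \<Rightarrow> (nat \<Rightarrow> cell \<Rightarrow> real) \<Rightarrow> (nat \<Rightarrow> cell \<Rightarrow> real) \<Rightarrow> bool" where
  "is_min_rho_component d N n h dt b \<delta> rho0 rho1 \<longleftrightarrow>
     (\<exists>w. (rho1, w) \<in> Kset d N n h \<delta> rho0 \<and>
          (\<forall>(rho, w') \<in> Kset d N n h \<delta> rho0.
              Jfun d N n h dt b rho0 rho1 w \<le> Jfun d N n h dt b rho0 rho w'))"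

end

theory Submission
  imports Defs
begin

lemma finite_cells: "finite (cells d N)"
proof -
  let ?g = "\<lambda>xs s. if s < d then xs ! s else (0::nat)"
  let ?X = "{xs. set xs \<subseteq> {..<N} \<and> length xs = d}"
  have "cells d N \<subseteq> ?g ` ?X"
  proof
    fix l assume l: "l \<in> cells d N"
    have l1: "\<forall>s<d. l s < N" and l2: "\<forall>s\<ge>d. l s = 0" using l unfolding cells_def by auto
    have "l = ?g (map l [0..<d])"
    proof (rule ext)
      fix s show "l s = ?g (map l [0..<d]) s"
        using l2 by (cases "s < d") auto
    qed
    moreover have "map l [0..<d] \<in> ?X" using l1 by auto
    ultimately show "l \<in> ?g ` ?X" by (rule image_eqI)
  qed
  moreover have "finite ?X"
    by (rule finite_lists_length_eq) simp
  ultimately show ?thesis by (meson finite_subset finite_imageI)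
qed

lemma finite_edges: "finite (edges d N)"
  by (simp add: edges_def finite_cells)

lemma shiftp_cells: "l \<in> cells d N \<Longrightarrow> s < d \<Longrightarrow> N \<ge> 1 \<Longrightarrow> shiftp N l s \<in> cells d N"
  unfolding cells_def shiftp_def by simp

lemma shiftm_cells: "l \<in> cells d N \<Longrightarrow> s < d \<Longrightarrow> N \<ge> 1 \<Longrightarrow> shiftm N l s \<in> cells d N"
  unfolding cells_def shiftm_def by simp

lemma mod_aux1: "(a::nat) < N \<Longrightarrow> ((a + N - 1) mod N + 1) mod N = a"
proof (cases "a = 0")
  case True
  assume "a < N" then show ?thesis using True by (cases N) auto
next
  case False
  assume "a < N"
  have e: "a + N - 1 = (a - 1) + N" using False by arith
  have "(a + N - 1) mod N = a - 1" unfolding e using \<open>a < N\<close> by simp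
  then show ?thesis using False \<open>a < N\<close> by simp
qed

lemma mod_aux2: "(a::nat) < N \<Longrightarrow> ((a + 1) mod N + N - 1) mod N = a"
proof (cases "a + 1 = N")
  case True then show ?thesis by simp
next
  case False
  assume "a < N"
  then have "(a+1) mod N = a + 1" using False by simp
  then show ?thesis using \<open>a < N\<close> by simp
qed

lemma shiftp_shiftm: "l \<in> cells d N \<Longrightarrow> s < d \<Longrightarrow> shiftp N (shiftm N l s) s = l"
proof -
  assume l: "l \<in> cells d N" and s: "s < d"
  have "shiftp N (shiftm N l s) s = l(s := ((l s + N - 1) mod N + 1) mod N)"
    by (simp add: shiftp_def shiftm_def)
  also have "((l s + N - 1) mod N + 1) mod N = l s" using l s by (intro mod_aux1) (simp add: cells_def)
  finally show ?thesis by simp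
qed

lemma shiftm_shiftp: "l \<in> cells d N \<Longrightarrow> s < d \<Longrightarrow> shiftm N (shiftp N l s) s = l"
proof -
  assume l: "l \<in> cells d N" and s: "s < d"
  have "shiftm N (shiftp N l s) s = l(s := ((l s + 1) mod N + N - 1) mod N)"
    by (simp add: shiftp_def shiftm_def)
  also have "((l s + 1) mod N + N - 1) mod N = l s" using l s by (intro mod_aux2) (simp add: cells_def)
  finally show ?thesis by simp
qed

lemma sum_shiftm:
  assumes "s < d" "N \<ge> 1"
  shows "(\<Sum>l\<in>cells d N. g (shiftm N l s)) = (\<Sum>l\<in>cells d N. g l)"
  by (rule sum.reindex_bij_witness[where i="\<lambda>m. shiftp N m s" and j="\<lambda>l. shiftm N l s"])
     (use assms in \<open>auto simp: shiftp_shiftm shiftm_shiftp shiftp_cells shiftm_cells\<close>)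

lemma sum_edges: "(\<Sum>e\<in>edges d N. f e) = (\<Sum>l\<in>cells d N. \<Sum>s<d. f (l, s))"
  unfolding edges_def by (simp add: sum.cartesian_product)

lemma sbp:
  assumes "N \<ge> 1"
  shows "(\<Sum>l\<in>cells d N. f l * dh d N h \<phi> l) = - (\<Sum>e\<in>edges d N. \<phi> e * Dh N h f e)"
proof -
  have "(\<Sum>l\<in>cells d N. f l * dh d N h \<phi> l)
      = (\<Sum>s<d. (\<Sum>l\<in>cells d N. f l * \<phi> (l, s)) / h - (\<Sum>l\<in>cells d N. f (shiftp N (shiftm N l s) s) * \<phi> (shiftm N l s, s)) / h)"
    unfolding dh_def
    apply (simp add: sum_distrib_left sum_divide_distrib sum_subtractf[symmetric])
    apply (subst sum.swap)
    apply (rule sum.cong, simp)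
    apply (rule sum.cong, simp)
    apply (subst shiftp_shiftm) apply (auto simp: cells_def)[2]
    by (simp add: algebra_simps diff_divide_distrib)
  also have "\<dots> = (\<Sum>s<d. (\<Sum>l\<in>cells d N. f l * \<phi> (l, s)) / h - (\<Sum>l\<in>cells d N. f (shiftp N l s) * \<phi> (l, s)) / h)"
    apply (rule sum.cong, simp)
    using sum_shiftm[OF _ assms, of _ d "\<lambda>m. f (shiftp N m _) * \<phi> (m, _)"] by simp
  also have "\<dots> = (\<Sum>s<d. - (\<Sum>l\<in>cells d N. \<phi> (l, s) * Dh N h f (l, s)))"
  proof (rule sum.cong[OF refl])
    fix s assume "s \<in> {..<d}"
    have "(\<Sum>l\<in>cells d N. f l * \<phi> (l, s)) / h - (\<Sum>l\<in>cells d N. f (shiftp N l s) * \<phi> (l, s)) / h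
       = (\<Sum>l\<in>cells d N. f l * \<phi> (l, s) / h - f (shiftp N l s) * \<phi> (l, s) / h)"
      by (simp add: sum_subtractf sum_divide_distrib)
    also have "\<dots> = (\<Sum>l\<in>cells d N. - (\<phi> (l, s) * Dh N h f (l, s)))"
      unfolding Dh_def by (rule sum.cong) (auto simp: algebra_simps diff_divide_distrib)
    also have "\<dots> = - (\<Sum>l\<in>cells d N. \<phi> (l, s) * Dh N h f (l, s))"
      by (simp add: sum_negf)
    finally show "(\<Sum>l\<in>cells d N. f l * \<phi> (l, s)) / h - (\<Sum>l\<in>cells d N. f (shiftp N l s) * \<phi> (l, s)) / h
       = - (\<Sum>l\<in>cells d N. \<phi> (l, s) * Dh N h f (l, s))" .
  qed
  also have "\<dots> = - (\<Sum>s<d. \<Sum>l\<in>cells d N. \<phi> (l, s) * Dh N h f (l, s))"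
    by (simp add: sum_negf)
  also have "\<dots> = - (\<Sum>l\<in>cells d N. \<Sum>s<d. \<phi> (l, s) * Dh N h f (l, s))"
    by (subst sum.swap) simp
  finally show ?thesis by (simp add: sum_edges)
qed

lemma dh_lin: "dh d N h (\<lambda>e. a * F e + c * G e) l = a * dh d N h F l + c * dh d N h G l"
proof -
  have "dh d N h (\<lambda>e. a * F e + c * G e) l = (\<Sum>s<d. a * ((F (l, s) - F (shiftm N l s, s)) / h) + c * ((G (l, s) - G (shiftm N l s, s)) / h))"
    unfolding dh_def by (rule sum.cong) (simp_all add: diff_divide_distrib add_divide_distrib algebra_simps)
  also have "\<dots> = a * dh d N h F l + c * dh d N h G l"
    unfolding dh_def by (simp only: sum.distrib sum_distrib_left)
  finally show ?thesis .
qed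

lemma dh_sum: "dh d N h (\<lambda>e. \<Sum>j\<in>A. F j e) l = (\<Sum>j\<in>A. dh d N h (F j) l)"
  unfolding dh_def
  by (subst sum.swap) (simp add: sum_subtractf[symmetric] sum_divide_distrib[symmetric])

lemma dh_cong: "(\<And>e. e \<in> edges d N \<Longrightarrow> F e = G e) \<Longrightarrow> l \<in> cells d N \<Longrightarrow> N \<ge> 1
   \<Longrightarrow> dh d N h F l = dh d N h G l"
  unfolding dh_def
  by (rule sum.cong) (auto simp: edges_def shiftm_cells)

lemma dh_zero: "dh d N h (\<lambda>e. 0) l = 0"
  by (simp add: dh_def)

lemma antisym_sum:
  assumes "finite A" "\<And>a b. a \<in> A \<Longrightarrow> b \<in> A \<Longrightarrow> X a b = - X b a"
  shows "(\<Sum>a\<in>A. \<Sum>b\<in>A. X a b) = (0::real)"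
proof -
  have "(\<Sum>a\<in>A. \<Sum>b\<in>A. X a b) = (\<Sum>b\<in>A. \<Sum>a\<in>A. X a b)" by (rule sum.swap)
  also have "\<dots> = (\<Sum>b\<in>A. \<Sum>a\<in>A. - X b a)" by (intro sum.cong refl) (metis assms(2))
  also have "\<dots> = - (\<Sum>a\<in>A. \<Sum>b\<in>A. X a b)" by (simp add: sum_negf)
  finally show ?thesis by simp
qed

lemma antisym_sum2:
  fixes X :: "'a \<Rightarrow> 'a \<Rightarrow> real"
  assumes "finite A" "\<And>a b. a \<in> A \<Longrightarrow> b \<in> A \<Longrightarrow> X a b = - X b a"
  shows "(\<Sum>a\<in>A. \<Sum>b\<in>A. X a b * (p a - p b)) = 2 * (\<Sum>a\<in>A. p a * (\<Sum>b\<in>A. X a b))"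
proof -
  have z: "(\<Sum>a\<in>A. \<Sum>b\<in>A. X a b * (p a + p b)) = (0::real)"
    by (rule antisym_sum) (use assms(1) in simp, metis assms(2) add.commute mult_minus_left)
  have 1: "(\<Sum>a\<in>A. \<Sum>b\<in>A. X a b * (p a - p b)) = (\<Sum>a\<in>A. \<Sum>b\<in>A. X a b * (p a + p b)) - (\<Sum>a\<in>A. \<Sum>b\<in>A. 2 * (X a b * p b))"
    unfolding sum_subtractf[symmetric]
    by (intro sum.cong refl) (simp add: algebra_simps)
  have 2: "(\<Sum>a\<in>A. \<Sum>b\<in>A. 2 * (X a b * p b)) = 2 * (\<Sum>a\<in>A. \<Sum>b\<in>A. X a b * p b)"
    by (simp only: sum_distrib_left)
  have "(\<Sum>a\<in>A. \<Sum>b\<in>A. X a b * p b) = (\<Sum>b\<in>A. \<Sum>a\<in>A. X a b * p b)" by (rule sum.swap)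
  also have "\<dots> = (\<Sum>b\<in>A. \<Sum>a\<in>A. - (p b * X b a))" by (intro sum.cong refl) (metis assms(2) mult.commute mult_minus_right)
  also have "\<dots> = - (\<Sum>b\<in>A. p b * (\<Sum>a\<in>A. X b a))"
    by (simp only: sum_negf sum_distrib_left)
  finally have 3: "(\<Sum>a\<in>A. \<Sum>b\<in>A. X a b * p b) = - (\<Sum>a\<in>A. p a * (\<Sum>b\<in>A. X a b))" .
  show ?thesis using 1 2 3 z by simp
qed

lemma phi_conv:
  fixes x y :: real
  assumes "x > 0" "y \<ge> 0"
  shows "y * ln y \<ge> x * ln x + (ln x + 1) * (y - x)"
proof (cases "y = 0")
  case True then show ?thesis using assms by (simp add: algebra_simps)
next
  case False
  then have y: "y > 0" using assms by simp
  have "ln (x / y) \<le> x / y - 1" by (rule ln_le_minus_one) (use assms y in simp)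
  moreover have "ln (x / y) = ln x - ln y" using assms y by (simp add: ln_div)
  ultimately have "ln x - ln y \<le> x / y - 1" by simp
  then have "y * (ln x - ln y) \<le> y * (x / y - 1)" using y by (intro mult_left_mono) simp_all
  moreover have "y * (x / y - 1) = x - y" using y by (simp add: field_simps)
  ultimately have "y * ln x - y * ln y \<le> x - y" by (simp add: right_diff_distrib)
  then show ?thesis by (simp add: algebra_simps)
qed

lemma dh_scale: "dh d N h (\<lambda>e. a * F e) l = a * dh d N h F l"
  using dh_lin[of d N h a F 0 F l] by simp

lemma dh_diff: "dh d N h (\<lambda>e. F e - G e) l = dh d N h F l - dh d N h G l"
  using dh_lin[of d N h 1 F "-1" G l] by simp

locale grid =
  fixes d N n :: nat and h dt :: real and b :: "nat \<Rightarrow> nat \<Rightarrow> real" and rho0 :: "nat \<Rightarrow> cell \<Rightarrow> real"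
  assumes N1: "N \<ge> 1" and n1: "n \<ge> 1" and hpos: "h > 0" and dtpos: "dt > 0"
    and bpos: "\<And>i j. i \<in> {1..n} \<Longrightarrow> j \<in> {1..n} \<Longrightarrow> i \<noteq> j \<Longrightarrow> b i j > 0 \<and> b i j = b j i"
    and r0pos: "\<And>i l. i \<in> {1..n} \<Longrightarrow> l \<in> cells d N \<Longrightarrow> rho0 i l > 0"
    and r0sum: "\<And>l. l \<in> cells d N \<Longrightarrow> (\<Sum>i=1..n. rho0 i l) = 1"
begin

abbreviation rh where "rh i e \<equiv> hat N (rho0 i) e"

lemma rh_pos: "i \<in> {1..n} \<Longrightarrow> e \<in> edges d N \<Longrightarrow> rh i e > 0"
  unfolding hat_def edges_def
  using r0pos shiftp_cells N1 by (auto intro!: add_pos_pos)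

definition gw :: "(nat \<Rightarrow> edge \<Rightarrow> real) \<Rightarrow> nat \<Rightarrow> edge \<Rightarrow> real" where
  "gw w i e = (\<Sum>j=1..n. b i j * rh j e * (w i e - w j e))"

lemma X_antisym:
  assumes "i \<in> {1..n}" "j \<in> {1..n}"
  shows "b i j * rh i e * rh j e * (w i e - w j e) = - (b j i * rh j e * rh i e * (w j e - w i e))"
proof (cases "i = j")
  case True then show ?thesis by simp
next
  case False then have "b i j = b j i" using bpos assms by blast
  then show ?thesis by (simp add: algebra_simps)
qed

lemma quad_lin:
  "(\<Sum>i=1..n. \<Sum>j=1..n. b i j * rh i e * rh j e * (w i e - w j e) * (p i - p j))
    = 2 * (\<Sum>i=1..n. p i * (rh i e * gw w i e))"
proof -
  have "(\<Sum>i=1..n. \<Sum>j=1..n. b i j * rh i e * rh j e * (w i e - w j e) * (p i - p j))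
      = 2 * (\<Sum>i=1..n. p i * (\<Sum>j=1..n. b i j * rh i e * rh j e * (w i e - w j e)))"
    by (rule antisym_sum2) (simp, rule X_antisym)
  also have "(\<lambda>i. \<Sum>j=1..n. b i j * rh i e * rh j e * (w i e - w j e)) = (\<lambda>i. rh i e * gw w i e)"
    unfolding gw_def by (intro ext) (simp add: sum_distrib_left algebra_simps)
  finally show ?thesis by simp
qed

lemma sum_rh_gw: "(\<Sum>i=1..n. rh i e * gw w i e) = 0"
proof -
  have "(\<Sum>i=1..n. \<Sum>j=1..n. b i j * rh i e * rh j e * (w i e - w j e)) = 0"
    by (rule antisym_sum) (simp, rule X_antisym)
  moreover have "(\<lambda>i. \<Sum>j=1..n. b i j * rh i e * rh j e * (w i e - w j e)) = (\<lambda>i. rh i e * gw w i e)"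
    unfolding gw_def by (intro ext) (simp add: sum_distrib_left algebra_simps)
  ultimately show ?thesis by metis
qed

definition Qf :: "(nat \<Rightarrow> edge \<Rightarrow> real) \<Rightarrow> real" where
  "Qf w = (\<Sum>e\<in>edges d N. \<Sum>i=1..n. \<Sum>j=1..n. b i j * rh i e * rh j e * (w i e - w j e)\<^sup>2)"

definition Ef :: "(nat \<Rightarrow> cell \<Rightarrow> real) \<Rightarrow> real" where
  "Ef \<rho> = (\<Sum>l\<in>cells d N. \<Sum>i=1..n. \<rho> i l * ln (\<rho> i l))"

lemma J_eq: "Jfun d N n h dt b rho0 \<rho> w = 1 / (4 * dt) * h ^ d * Qf w + h ^ d * Ef \<rho>"
  unfolding Jfun_def Qf_def Ef_def by simp

lemma Qf_nonneg: "Qf w \<ge> 0"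
  unfolding Qf_def
proof (intro sum_nonneg)
  fix e i j assume e: "e \<in> edges d N" and i: "i \<in> {1..n}" and j: "j \<in> {1..n}"
  show "0 \<le> b i j * rh i e * rh j e * (w i e - w j e)\<^sup>2"
  proof (cases "i = j")
    case False
    then have "b i j > 0" using bpos i j by blast
    then show ?thesis using rh_pos[OF i e] rh_pos[OF j e] by simp
  qed simp
qed

lemma Qf_scale: "Qf (\<lambda>i e. c * w i e) = c\<^sup>2 * Qf w"
  unfolding Qf_def sum_distrib_left
  by (intro sum.cong refl) (simp add: power2_eq_square algebra_simps)


lemma Kset_iff: "(\<rho>, w) \<in> Kset d N n h \<delta> rho0 \<longleftrightarrow>
   (\<forall>i\<in>{1..n}. \<forall>l\<in>cells d N. \<rho> i l \<ge> \<delta> \<and> \<rho> i l - rho0 i l + dh d N h (\<lambda>e. rh i e * w i e) l = 0) \<and>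
   (\<forall>l\<in>cells d N. (\<Sum>i=1..n. \<rho> i l) = 1) \<and>
   (\<forall>e\<in>edges d N. (\<Sum>i=1..n. rh i e * w i e) = 0)"
  unfolding Kset_def by simp

definition DL :: "(nat \<Rightarrow> cell \<Rightarrow> real) \<Rightarrow> nat \<Rightarrow> edge \<Rightarrow> real" where
  "DL \<rho> i e = Dh N h (\<lambda>l. ln (\<rho> i l)) e"

definition scheme_eqs where
  "scheme_eqs \<rho>1 v \<longleftrightarrow>
        (\<forall>i\<in>{1..n}. \<forall>l\<in>cells d N.
            (\<rho>1 i l - rho0 i l) / dt + dh d N h (\<lambda>e. rh i e * v i e) l = 0) \<and>
        (\<forall>i\<in>{1..n}. \<forall>e\<in>edges d N.
            - (\<Sum>j=1..n. b i j * rh j e * (v i e - v j e))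
            = Dh N h (\<lambda>l. ln (\<rho>1 i l)) e
              - (\<Sum>j=1..n. rh j e * Dh N h (\<lambda>l. ln (\<rho>1 j l)) e)
                / (\<Sum>j=1..n. rh j e)) \<and>
        (\<forall>e\<in>edges d N. (\<Sum>j=1..n. rh j e * v j e) = 0)"

lemma scheme_iff: "is_scheme_solution d N n h dt b rho0 \<rho>1 \<longleftrightarrow> (\<exists>v. scheme_eqs \<rho>1 v)"
  unfolding is_scheme_solution_def scheme_eqs_def by simp

lemma suff_K:
  assumes sch: "scheme_eqs \<rho>1 v" and lb: "\<forall>i\<in>{1..n}. \<forall>l\<in>cells d N. \<rho>1 i l \<ge> \<delta>"
  shows "(\<rho>1, \<lambda>i e. dt * v i e) \<in> Kset d N n h \<delta> rho0"
proof -
  have e1: "\<And>i l. i \<in> {1..n} \<Longrightarrow> l \<in> cells d N \<Longrightarrow> (\<rho>1 i l - rho0 i l) / dt + dh d N h (\<lambda>e. rh i e * v i e) l = 0"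
    and e3: "\<And>e. e \<in> edges d N \<Longrightarrow> (\<Sum>j=1..n. rh j e * v j e) = 0"
    using sch unfolding scheme_eqs_def by auto
  have K1: "\<rho>1 i l - rho0 i l + dh d N h (\<lambda>e. rh i e * (dt * v i e)) l = 0"
    if i: "i \<in> {1..n}" and l: "l \<in> cells d N" for i l
  proof -
    have "(\<lambda>e. rh i e * (dt * v i e)) = (\<lambda>e. dt * (rh i e * v i e))" by (intro ext) (simp add: algebra_simps)
    then have "dh d N h (\<lambda>e. rh i e * (dt * v i e)) l = dt * dh d N h (\<lambda>e. rh i e * v i e) l"
      by (simp add: dh_scale)
    moreover have "\<rho>1 i l - rho0 i l = - dt * dh d N h (\<lambda>e. rh i e * v i e) l"
      using e1[OF i l] dtpos by (simp add: field_simps)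
    ultimately show ?thesis by simp
  qed
  have K3: "(\<Sum>j=1..n. rh j e * (dt * v j e)) = 0" if e: "e \<in> edges d N" for e
  proof -
    have "(\<Sum>j=1..n. rh j e * (dt * v j e)) = dt * (\<Sum>j=1..n. rh j e * v j e)"
      by (simp add: sum_distrib_left algebra_simps)
    then show ?thesis using e3[OF e] by simp
  qed
  have K2: "(\<Sum>i=1..n. \<rho>1 i l) = 1" if l: "l \<in> cells d N" for l
  proof -
    have "(\<Sum>i=1..n. \<rho>1 i l) = (\<Sum>i=1..n. rho0 i l - dh d N h (\<lambda>e. rh i e * (dt * v i e)) l)"
      by (intro sum.cong refl) (use K1 l in \<open>simp add: algebra_simps\<close>)
    also have "\<dots> = 1 - dh d N h (\<lambda>e. \<Sum>i=1..n. rh i e * (dt * v i e)) l"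
      using r0sum[OF l] by (simp add: sum_subtractf dh_sum)
    also have "dh d N h (\<lambda>e. \<Sum>i=1..n. rh i e * (dt * v i e)) l = dh d N h (\<lambda>e. 0) l"
      by (rule dh_cong) (use K3 l N1 in auto)
    finally show ?thesis by (simp add: dh_zero)
  qed
  show ?thesis unfolding Kset_iff using K1 K2 K3 lb by auto
qed


lemma gw_scale: "gw (\<lambda>i e. c * v i e) i e = c * gw v i e"
  unfolding gw_def by (simp add: sum_distrib_left algebra_simps)

lemma suff_min:
  assumes sch: "scheme_eqs \<rho>1 v" and pos: "\<forall>i\<in>{1..n}. \<forall>l\<in>cells d N. \<rho>1 i l > 0"
    and K: "(\<rho>, w) \<in> Kset d N n h 0 rho0"
  shows "Jfun d N n h dt b rho0 \<rho>1 (\<lambda>i e. dt * v i e) \<le> Jfun d N n h dt b rho0 \<rho> w"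
proof -
  define w1 where "w1 = (\<lambda>i e. dt * v i e)"
  define \<Delta> where "\<Delta> = (\<lambda>i e. w i e - w1 i e)"
  define cc where "cc = (\<lambda>e. (\<Sum>j=1..n. rh j e * DL \<rho>1 j e) / (\<Sum>j=1..n. rh j e))"
  define S where "S = (\<Sum>e\<in>edges d N. \<Sum>i=1..n. rh i e * \<Delta> i e * DL \<rho>1 i e)"
  have K1: "(\<rho>1, w1) \<in> Kset d N n h 0 rho0"
    unfolding w1_def by (rule suff_K[OF sch]) (use pos in \<open>auto intro: less_imp_le\<close>)
  have e2: "- gw v i e = DL \<rho>1 i e - cc e" if "i \<in> {1..n}" "e \<in> edges d N" for i e
    using sch that unfolding scheme_eqs_def gw_def DL_def cc_def by auto
  have Kw: "\<And>i l. i \<in> {1..n} \<Longrightarrow> l \<in> cells d N \<Longrightarrow> \<rho> i l \<ge> 0 \<and> \<rho> i l - rho0 i l + dh d N h (\<lambda>e. rh i e * w i e) l = 0"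
    "\<And>l. l \<in> cells d N \<Longrightarrow> (\<Sum>i=1..n. \<rho> i l) = 1"
    "\<And>e. e \<in> edges d N \<Longrightarrow> (\<Sum>i=1..n. rh i e * w i e) = 0"
    using K unfolding Kset_iff by auto
  have Kw1: "\<And>i l. i \<in> {1..n} \<Longrightarrow> l \<in> cells d N \<Longrightarrow> \<rho>1 i l - rho0 i l + dh d N h (\<lambda>e. rh i e * w1 i e) l = 0"
    "\<And>l. l \<in> cells d N \<Longrightarrow> (\<Sum>i=1..n. \<rho>1 i l) = 1"
    "\<And>e. e \<in> edges d N \<Longrightarrow> (\<Sum>i=1..n. rh i e * w1 i e) = 0"
    using K1 unfolding Kset_iff by auto
  have sumD: "(\<Sum>i=1..n. rh i e * \<Delta> i e) = 0" if e: "e \<in> edges d N" for e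
  proof -
    have "(\<Sum>i=1..n. rh i e * \<Delta> i e) = (\<Sum>i=1..n. rh i e * w i e) - (\<Sum>i=1..n. rh i e * w1 i e)"
      unfolding \<Delta>_def by (simp add: sum_subtractf[symmetric] algebra_simps)
    then show ?thesis using Kw(3)[OF e] Kw1(3)[OF e] by simp
  qed
  define LIN where "LIN = (\<Sum>e\<in>edges d N. \<Sum>i=1..n. \<Sum>j=1..n.
      b i j * rh i e * rh j e * (w1 i e - w1 j e) * (2 * \<Delta> i e - 2 * \<Delta> j e))"
  have Q1: "Qf w1 + LIN \<le> Qf w"
  proof -
    have "Qf w1 + LIN = (\<Sum>e\<in>edges d N. \<Sum>i=1..n. \<Sum>j=1..n.
      b i j * rh i e * rh j e * (w1 i e - w1 j e)\<^sup>2 + b i j * rh i e * rh j e * (w1 i e - w1 j e) * (2 * \<Delta> i e - 2 * \<Delta> j e))"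
      unfolding Qf_def LIN_def by (simp only: sum.distrib)
    also have "\<dots> \<le> Qf w"
      unfolding Qf_def
    proof (intro sum_mono)
      fix e i j assume e: "e \<in> edges d N" and i: "i \<in> {1..n}" and j: "j \<in> {1..n}"
      show "b i j * rh i e * rh j e * (w1 i e - w1 j e)\<^sup>2 + b i j * rh i e * rh j e * (w1 i e - w1 j e) * (2 * \<Delta> i e - 2 * \<Delta> j e)
          \<le> b i j * rh i e * rh j e * (w i e - w j e)\<^sup>2"
      proof (cases "i = j")
        case False
        then have "b i j > 0" using bpos i j by blast
        then have c: "b i j * rh i e * rh j e \<ge> 0" using rh_pos[OF i e] rh_pos[OF j e] by simp
        have "b i j * rh i e * rh j e * (w i e - w j e)\<^sup>2 - (b i j * rh i e * rh j e * (w1 i e - w1 j e)\<^sup>2 + b i j * rh i e * rh j e * (w1 i e - w1 j e) * (2 * \<Delta> i e - 2 * \<Delta> j e))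
            = (b i j * rh i e * rh j e) * (\<Delta> i e - \<Delta> j e)\<^sup>2"
          unfolding \<Delta>_def by (simp add: power2_eq_square algebra_simps)
        also have "\<dots> \<ge> 0" using c by simp
        finally show ?thesis by simp
      qed simp
    qed
    finally show ?thesis .
  qed
  have LIN_eq: "LIN = - 4 * dt * S"
  proof -
    have "LIN = (\<Sum>e\<in>edges d N. 2 * (\<Sum>i=1..n. (2 * \<Delta> i e) * (rh i e * gw w1 i e)))"
      unfolding LIN_def by (intro sum.cong refl) (rule quad_lin)
    also have "\<dots> = (\<Sum>e\<in>edges d N. - 4 * dt * (\<Sum>i=1..n. rh i e * \<Delta> i e * DL \<rho>1 i e))"
    proof (intro sum.cong refl)
      fix e assume e: "e \<in> edges d N"
      have "(\<Sum>i=1..n. (2 * \<Delta> i e) * (rh i e * gw w1 i e)) = (\<Sum>i=1..n. (2 * dt) * (cc e * (rh i e * \<Delta> i e) - rh i e * \<Delta> i e * DL \<rho>1 i e))"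
      proof (intro sum.cong refl)
        fix i assume i: "i \<in> {1..n}"
        have "gw w1 i e = dt * gw v i e" unfolding w1_def by (rule gw_scale)
        also have "gw v i e = cc e - DL \<rho>1 i e" using e2[OF i e] by simp
        finally have g: "gw w1 i e = dt * (cc e - DL \<rho>1 i e)" .
        show "(2 * \<Delta> i e) * (rh i e * gw w1 i e) = (2 * dt) * (cc e * (rh i e * \<Delta> i e) - rh i e * \<Delta> i e * DL \<rho>1 i e)"
          unfolding g by (simp add: algebra_simps)
      qed
      also have "\<dots> = (2 * dt) * (cc e * (\<Sum>i=1..n. rh i e * \<Delta> i e) - (\<Sum>i=1..n. rh i e * \<Delta> i e * DL \<rho>1 i e))"
        by (simp only: sum_distrib_left sum_subtractf[symmetric] right_diff_distrib)
      also have "\<dots> = - (2 * dt) * (\<Sum>i=1..n. rh i e * \<Delta> i e * DL \<rho>1 i e)"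
        using sumD[OF e] by simp
      finally show "2 * (\<Sum>i=1..n. (2 * \<Delta> i e) * (rh i e * gw w1 i e)) = - 4 * dt * (\<Sum>i=1..n. rh i e * \<Delta> i e * DL \<rho>1 i e)"
        by simp
    qed
    also have "\<dots> = - 4 * dt * S" unfolding S_def by (simp add: sum_distrib_left)
    finally show ?thesis .
  qed
  have E1: "Ef \<rho>1 + (\<Sum>l\<in>cells d N. \<Sum>i=1..n. (ln (\<rho>1 i l) + 1) * (\<rho> i l - \<rho>1 i l)) \<le> Ef \<rho>"
    unfolding Ef_def sum.distrib[symmetric]
    by (intro sum_mono phi_conv[simplified]) (use pos Kw(1) in auto)
  have sig: "\<rho> i l - \<rho>1 i l = - dh d N h (\<lambda>e. rh i e * \<Delta> i e) l" if i: "i \<in> {1..n}" and l: "l \<in> cells d N" for i l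
  proof -
    have "(\<lambda>e. rh i e * \<Delta> i e) = (\<lambda>e. rh i e * w i e - rh i e * w1 i e)"
      unfolding \<Delta>_def by (intro ext) (simp add: algebra_simps)
    then have "dh d N h (\<lambda>e. rh i e * \<Delta> i e) l = dh d N h (\<lambda>e. rh i e * w i e) l - dh d N h (\<lambda>e. rh i e * w1 i e) l"
      by (simp add: dh_diff)
    then show ?thesis using Kw(1)[OF i l] Kw1(1)[OF i l] by simp
  qed
  have E2: "(\<Sum>l\<in>cells d N. \<Sum>i=1..n. (ln (\<rho>1 i l) + 1) * (\<rho> i l - \<rho>1 i l)) = S"
  proof -
    have "(\<Sum>l\<in>cells d N. \<Sum>i=1..n. (ln (\<rho>1 i l) + 1) * (\<rho> i l - \<rho>1 i l))
        = (\<Sum>l\<in>cells d N. \<Sum>i=1..n. ln (\<rho>1 i l) * (\<rho> i l - \<rho>1 i l)) + (\<Sum>l\<in>cells d N. (\<Sum>i=1..n. \<rho> i l) - (\<Sum>i=1..n. \<rho>1 i l))"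
      by (simp add: sum.distrib[symmetric] sum_subtractf[symmetric] algebra_simps)
    also have "(\<Sum>l\<in>cells d N. (\<Sum>i=1..n. \<rho> i l) - (\<Sum>i=1..n. \<rho>1 i l)) = 0"
      using Kw(2) Kw1(2) by simp
    also have "(\<Sum>l\<in>cells d N. \<Sum>i=1..n. ln (\<rho>1 i l) * (\<rho> i l - \<rho>1 i l))
        = (\<Sum>i=1..n. \<Sum>l\<in>cells d N. ln (\<rho>1 i l) * (\<rho> i l - \<rho>1 i l))" by (rule sum.swap)
    also have "\<dots> = (\<Sum>i=1..n. \<Sum>e\<in>edges d N. rh i e * \<Delta> i e * DL \<rho>1 i e)"
    proof (intro sum.cong refl)
      fix i assume i: "i \<in> {1..n}"
      have "(\<Sum>l\<in>cells d N. ln (\<rho>1 i l) * (\<rho> i l - \<rho>1 i l)) = - (\<Sum>l\<in>cells d N. ln (\<rho>1 i l) * dh d N h (\<lambda>e. rh i e * \<Delta> i e) l)"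
        unfolding sum_negf[symmetric] by (intro sum.cong refl) (simp add: sig[OF i])
      also have "\<dots> = (\<Sum>e\<in>edges d N. rh i e * \<Delta> i e * DL \<rho>1 i e)"
        unfolding sbp[OF N1] DL_def by simp
      finally show "(\<Sum>l\<in>cells d N. ln (\<rho>1 i l) * (\<rho> i l - \<rho>1 i l)) = (\<Sum>e\<in>edges d N. rh i e * \<Delta> i e * DL \<rho>1 i e)" .
    qed
    also have "\<dots> = S" unfolding S_def by (rule sum.swap)
    finally show ?thesis by simp
  qed
  have hd: "h ^ d > 0" using hpos by simp
  have "Jfun d N n h dt b rho0 \<rho>1 w1 = 1 / (4 * dt) * h ^ d * (Qf w1 + LIN) + h ^ d * (Ef \<rho>1 + S)"
    unfolding J_eq LIN_eq using dtpos by (simp add: field_simps)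
  also have "\<dots> \<le> 1 / (4 * dt) * h ^ d * Qf w + h ^ d * Ef \<rho>"
    using Q1 E1 E2 hd dtpos by (intro add_mono mult_left_mono) auto
  also have "\<dots> = Jfun d N n h dt b rho0 \<rho> w" unfolding J_eq ..
  finally show ?thesis unfolding w1_def .
qed

end

lemma bound_gen:
  fixes x r t m :: real
  assumes "0 < x" "x \<le> 1" "m \<le> r" "r \<le> 1" "0 < m" "0 \<le> t" "t \<le> 1"
  shows "(ln ((1 - t) * x + t * r) + 1) * (r - x) \<le> 1 - ln m"
proof -
  define xt where "xt = (1 - t) * x + t * r"
  have lnm: "ln m \<le> 0" using assms by simp
  show ?thesis
  proof (cases "x \<le> r")
    case True
    have "t * x \<le> t * r" by (rule mult_left_mono) (use True assms in auto)
    then have "xt \<ge> x" unfolding xt_def by (simp add: algebra_simps)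
    have "t * (r - x) \<le> 1 * (r - x)" by (rule mult_right_mono) (use True assms in auto)
    moreover have "xt = x + t * (r - x)" unfolding xt_def by (simp add: algebra_simps)
    ultimately have "xt \<le> r" by simp
    then have "xt \<le> 1" using assms by simp
    have "xt > 0" using \<open>xt \<ge> x\<close> assms by simp
    then have l: "ln xt \<le> 0" using \<open>xt \<le> 1\<close> by simp
    show ?thesis
    proof (cases "ln xt + 1 \<le> 0")
      case True
      then have "(ln xt + 1) * (r - x) \<le> 0" using \<open>x \<le> r\<close> by (simp add: mult_nonpos_nonneg)
      then show ?thesis using lnm unfolding xt_def by simp
    next
      case False
      have "(ln xt + 1) * (r - x) \<le> 1 * 1"
        using False l assms True by (intro mult_mono) auto
      then show ?thesis using lnm unfolding xt_def by simp
    qed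
  next
    case False
    have "0 \<le> (1 - t) * (x - r)" using False assms by (intro mult_nonneg_nonneg) auto
    moreover have "xt = r + (1 - t) * (x - r)" unfolding xt_def by (simp add: algebra_simps)
    ultimately have "xt \<ge> r" by simp
    then have "xt \<ge> m" "xt > 0" using assms by auto
    then have "ln xt \<ge> ln m" using assms by simp
    then have "(ln xt + 1) * (r - x) \<le> (ln m + 1) * (r - x)"
      using False by (intro mult_right_mono_neg) auto
    also have "\<dots> \<le> 1 - ln m"
    proof (cases "ln m + 1 \<ge> 0")
      case True
      then have "(ln m + 1) * (r - x) \<le> 0" using False by (simp add: mult_nonneg_nonpos)
      then show ?thesis using lnm by simp
    next
      case F2: False
      have "(ln m + 1) * (r - x) = (- ln m - 1) * (x - r)" by (simp add: algebra_simps)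
      also have "\<dots> \<le> (- ln m - 1) * 1" using F2 assms False by (intro mult_left_mono) auto
      finally show ?thesis by simp
    qed
    finally show ?thesis unfolding xt_def .
  qed
qed

lemma bound_sp:
  fixes x r t m :: real
  assumes "0 < x" "x \<le> t" "m \<le> r" "r \<le> 1" "0 < t" "t \<le> m / 2" "ln (2 * t) + 1 \<le> 0"
  shows "(ln ((1 - t) * x + t * r) + 1) * (r - x) \<le> (ln (2 * t) + 1) * (m / 2)"
proof -
  define xt where "xt = (1 - t) * x + t * r"
  have t1: "t \<le> 1" using assms by simp
  have m1: "m \<le> 1" using assms by simp
  have "(1 - t) * x \<le> x" using assms t1 by (simp add: mult_left_le_one_le)
  moreover have "t * r \<le> t" using assms by (simp add: mult_left_le)
  ultimately have "xt \<le> 2 * t" unfolding xt_def using assms(2) by simp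
  moreover have "xt > 0"
  proof -
    have "0 \<le> (1 - t) * x" using assms t1 by (intro mult_nonneg_nonneg) auto
    moreover have "0 < t * r" using assms by (intro mult_pos_pos) auto
    ultimately show ?thesis unfolding xt_def by simp
  qed
  ultimately have "ln xt \<le> ln (2 * t)" by simp
  have rx: "r - x \<ge> m / 2" using assms by simp
  have "(ln xt + 1) * (r - x) \<le> (ln (2 * t) + 1) * (r - x)"
    using \<open>ln xt \<le> ln (2 * t)\<close> rx assms by (intro mult_right_mono) auto
  also have "\<dots> \<le> (ln (2 * t) + 1) * (m / 2)"
    using rx assms by (intro mult_left_mono_neg) auto
  finally show ?thesis unfolding xt_def .
qed

lemma phi_step:
  fixes x r t :: real
  assumes "0 < (1 - t) * x + t * r" "0 \<le> x"
  shows "((1 - t) * x + t * r) * ln ((1 - t) * x + t * r)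
     \<le> x * ln x + t * ((ln ((1 - t) * x + t * r) + 1) * (r - x))"
  using phi_conv[OF assms] by (simp add: algebra_simps)


context grid
begin

lemma zero_cell: "(\<lambda>_. 0) \<in> cells d N"
  using N1 unfolding cells_def by auto

lemma r0_le1: "i \<in> {1..n} \<Longrightarrow> l \<in> cells d N \<Longrightarrow> rho0 i l \<le> 1"
  using member_le_sum[of i "{1..n}" "\<lambda>i. rho0 i l"] r0sum[of l] r0pos by (auto intro: less_imp_le)

lemma K_le1:
  assumes "(\<rho>, w) \<in> Kset d N n h \<delta> rho0" "\<delta> \<ge> 0" "i \<in> {1..n}" "l \<in> cells d N"
  shows "\<rho> i l \<le> 1"
proof -
  have "\<forall>j\<in>{1..n}. \<rho> j l \<ge> 0" "(\<Sum>j=1..n. \<rho> j l) = 1"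
    using assms unfolding Kset_iff by (auto intro: order_trans[OF assms(2)])
  then show ?thesis using member_le_sum[of i "{1..n}" "\<lambda>i. \<rho> i l"] assms(3) by auto
qed

lemma Kset_comb:
  assumes K: "(\<rho>, w) \<in> Kset d N n h \<delta> rho0" and t: "0 \<le> t" "t \<le> 1"
    and lb: "\<forall>i\<in>{1..n}. \<forall>l\<in>cells d N. \<delta> \<le> rho0 i l"
  shows "(\<lambda>i l. (1 - t) * \<rho> i l + t * rho0 i l, \<lambda>i e. (1 - t) * w i e) \<in> Kset d N n h \<delta> rho0"
proof -
  have Kw: "\<And>i l. i \<in> {1..n} \<Longrightarrow> l \<in> cells d N \<Longrightarrow> \<rho> i l \<ge> \<delta> \<and> \<rho> i l - rho0 i l + dh d N h (\<lambda>e. rh i e * w i e) l = 0"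
    "\<And>l. l \<in> cells d N \<Longrightarrow> (\<Sum>i=1..n. \<rho> i l) = 1"
    "\<And>e. e \<in> edges d N \<Longrightarrow> (\<Sum>i=1..n. rh i e * w i e) = 0"
    using K unfolding Kset_iff by auto
  have A: "(1 - t) * \<rho> i l + t * rho0 i l \<ge> \<delta>" if "i \<in> {1..n}" "l \<in> cells d N" for i l
  proof -
    have "(1 - t) * \<delta> \<le> (1 - t) * \<rho> i l" using Kw(1)[OF that] t by (intro mult_left_mono) auto
    moreover have "t * \<delta> \<le> t * rho0 i l" using lb that t by (intro mult_left_mono) auto
    ultimately show ?thesis by (simp add: algebra_simps)
  qed
  have B: "(1 - t) * \<rho> i l + t * rho0 i l - rho0 i l + dh d N h (\<lambda>e. rh i e * ((1 - t) * w i e)) l = 0"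
    if "i \<in> {1..n}" "l \<in> cells d N" for i l
  proof -
    have "(\<lambda>e. rh i e * ((1 - t) * w i e)) = (\<lambda>e. (1 - t) * (rh i e * w i e))" by (intro ext) (simp add: algebra_simps)
    then have e1: "dh d N h (\<lambda>e. rh i e * ((1 - t) * w i e)) l = (1 - t) * dh d N h (\<lambda>e. rh i e * w i e) l"
      by (simp add: dh_scale)
    have e2: "dh d N h (\<lambda>e. rh i e * w i e) l = rho0 i l - \<rho> i l" using Kw(1)[OF that] by simp
    show ?thesis unfolding e1 e2 by (simp add: algebra_simps)
  qed
  have C: "(\<Sum>i=1..n. (1 - t) * \<rho> i l + t * rho0 i l) = 1" if "l \<in> cells d N" for l
  proof -
    have "(\<Sum>i=1..n. (1 - t) * \<rho> i l + t * rho0 i l) = (1 - t) * (\<Sum>i=1..n. \<rho> i l) + t * (\<Sum>i=1..n. rho0 i l)"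
      by (simp add: sum.distrib sum_distrib_left)
    then show ?thesis using Kw(2)[OF that] r0sum[OF that] by simp
  qed
  have D: "(\<Sum>i=1..n. rh i e * ((1 - t) * w i e)) = 0" if "e \<in> edges d N" for e
  proof -
    have "(\<Sum>i=1..n. rh i e * ((1 - t) * w i e)) = (1 - t) * (\<Sum>i=1..n. rh i e * w i e)"
      by (simp add: sum_distrib_left algebra_simps)
    then show ?thesis using Kw(3)[OF that] by simp
  qed
  show ?thesis unfolding Kset_iff using A B C D by auto
qed

lemma improve:
  fixes m0 t C M :: real
  assumes m0: "0 < m0" "\<forall>i\<in>{1..n}. \<forall>l\<in>cells d N. m0 \<le> rho0 i l"
    and t: "0 < t" "t \<le> m0 / 2" "ln (2 * t) + 1 \<le> - (2 * C * M / m0) - 1"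
    and CM: "C = real n * real (card (cells d N))" "M = 1 - ln m0"
    and K: "(\<rho>, w) \<in> Kset d N n h 0 rho0" and pos: "\<forall>i\<in>{1..n}. \<forall>l\<in>cells d N. \<rho> i l > 0"
    and sp: "i0 \<in> {1..n}" "l0 \<in> cells d N" "\<rho> i0 l0 \<le> t"
  shows "Jfun d N n h dt b rho0 (\<lambda>i l. (1 - t) * \<rho> i l + t * rho0 i l) (\<lambda>i e. (1 - t) * w i e)
       < Jfun d N n h dt b rho0 \<rho> w"
proof -
  have one: "1 \<in> {1..n}" using n1 by simp
  have m01: "m0 \<le> 1" using m0(2) one zero_cell r0_le1[OF one zero_cell] by force
  have t1: "t \<le> 1" using t m01 by simp
  have C0: "C \<ge> 0" using CM by simp
  have M1: "M \<ge> 1" using CM m0 m01 by simp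
  have "2 * C * M / m0 \<ge> 0" using C0 M1 m0 by simp
  then have lt: "ln (2 * t) + 1 \<le> 0" using t by simp
  define A where "A = (ln (2 * t) + 1) * (m0 / 2)"
  have "A \<le> (- (2 * C * M / m0) - 1) * (m0 / 2)" unfolding A_def using t(3) m0 by (intro mult_right_mono) auto
  also have "\<dots> = - C * M - m0 / 2" using m0 by (simp add: field_simps)
  finally have A_le: "A \<le> - C * M - m0 / 2" .
  let ?xt = "\<lambda>i l. (1 - t) * \<rho> i l + t * rho0 i l"
  have pw: "?xt i l * ln (?xt i l) \<le> \<rho> i l * ln (\<rho> i l) + t * M + (if l = l0 \<and> i = i0 then t * (A - M) else 0)"
    if i: "i \<in> {1..n}" and l: "l \<in> cells d N" for i l
  proof -
    have xpos: "\<rho> i l > 0" using pos i l by auto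
    have x1: "\<rho> i l \<le> 1" using K_le1[OF K _ i l] by simp
    have r: "m0 \<le> rho0 i l" "rho0 i l \<le> 1" using m0 i l r0_le1 by auto
    have xt: "0 < ?xt i l"
    proof -
      have "0 \<le> (1 - t) * \<rho> i l" using xpos t1 by simp
      moreover have "0 < t * rho0 i l" using t r m0 by simp
      ultimately show ?thesis by simp
    qed
    have st: "?xt i l * ln (?xt i l) \<le> \<rho> i l * ln (\<rho> i l) + t * ((ln (?xt i l) + 1) * (rho0 i l - \<rho> i l))"
      by (rule phi_step) (use xt xpos in auto)
    show ?thesis
    proof (cases "l = l0 \<and> i = i0")
      case True
      have "(ln (?xt i l) + 1) * (rho0 i l - \<rho> i l) \<le> A"
        unfolding A_def by (rule bound_sp) (use xpos True sp r t lt in auto)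
      then have "t * ((ln (?xt i l) + 1) * (rho0 i l - \<rho> i l)) \<le> t * A" using t by (intro mult_left_mono) auto
      then show ?thesis unfolding if_P[OF True] using st by (simp add: algebra_simps)
    next
      case False
      have "(ln (?xt i l) + 1) * (rho0 i l - \<rho> i l) \<le> M"
        unfolding CM by (rule bound_gen) (use xpos x1 r m0 t t1 in auto)
      then have "t * ((ln (?xt i l) + 1) * (rho0 i l - \<rho> i l)) \<le> t * M" using t by (intro mult_left_mono) auto
      then show ?thesis unfolding if_not_P[OF False] using st by simp
    qed
  qed
  have "Ef ?xt \<le> (\<Sum>l\<in>cells d N. \<Sum>i=1..n. \<rho> i l * ln (\<rho> i l) + t * M + (if l = l0 \<and> i = i0 then t * (A - M) else 0))"
    unfolding Ef_def by (intro sum_mono pw) auto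
  also have "\<dots> = Ef \<rho> + (\<Sum>l\<in>cells d N. \<Sum>i=1..n. t * M) + (\<Sum>l\<in>cells d N. \<Sum>i=1..n. (if l = l0 \<and> i = i0 then t * (A - M) else 0))"
    unfolding Ef_def by (simp add: sum.distrib)
  also have "(\<Sum>l\<in>cells d N. \<Sum>i=1..n. t * M) = C * (t * M)" unfolding CM by simp
  also have "(\<Sum>l\<in>cells d N. \<Sum>i=1..n. (if l = l0 \<and> i = i0 then t * (A - M) else 0)) = t * (A - M)"
  proof -
    have "(\<Sum>l\<in>cells d N. \<Sum>i=1..n. (if l = l0 \<and> i = i0 then t * (A - M) else 0))
        = (\<Sum>l\<in>cells d N. (if l = l0 then t * (A - M) else 0))"
      by (intro sum.cong refl) (use sp(1) in auto)
    also have "\<dots> = t * (A - M)" using sp(2) finite_cells by simp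
    finally show ?thesis .
  qed
  finally have E: "Ef ?xt \<le> Ef \<rho> + t * (C * M + A - M)" by (simp add: algebra_simps)
  have "t * (C * M + A - M) < 0" using A_le M1 m0 t by (intro mult_pos_neg) auto
  with E have E2: "Ef ?xt < Ef \<rho>" by simp
  have Q: "Qf (\<lambda>i e. (1 - t) * w i e) \<le> Qf w"
  proof -
    have "(1 - t)\<^sup>2 \<le> 1" using t t1 by (simp add: power_le_one)
    then have "(1 - t)\<^sup>2 * Qf w \<le> 1 * Qf w" using Qf_nonneg by (intro mult_right_mono) auto
    then show ?thesis by (simp add: Qf_scale)
  qed
  have hd: "h ^ d > 0" using hpos by simp
  have "1 / (4 * dt) * h ^ d * Qf (\<lambda>i e. (1 - t) * w i e) \<le> 1 / (4 * dt) * h ^ d * Qf w"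
    using Q hd dtpos by (intro mult_left_mono) auto
  moreover have "h ^ d * Ef ?xt < h ^ d * Ef \<rho>" using E2 hd by simp
  ultimately show ?thesis unfolding J_eq by simp
qed

end

context grid
begin

lemma deriv_quad:
  "((\<lambda>t. c * ((w1 + t * p1) - (w2 + t * p2))\<^sup>2) has_real_derivative c * (2 * (w1 - w2) * (p1 - p2))) (at 0)"
  by (auto intro!: derivative_eq_intros simp: algebra_simps)

lemma deriv_ent:
  assumes "(x::real) > 0"
  shows "((\<lambda>t. (x + t * s) * ln (x + t * s)) has_real_derivative s * (ln x + 1)) (at 0)"
  using assms by (auto intro!: derivative_eq_intros simp: algebra_simps)

lemma J_deriv:
  assumes pos: "\<forall>i\<in>{1..n}. \<forall>l\<in>cells d N. \<rho> i l > 0"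
  shows "((\<lambda>t. Jfun d N n h dt b rho0 (\<lambda>i l. \<rho> i l + t * \<sigma> i l) (\<lambda>i e. w i e + t * \<psi> i e)) has_real_derivative
     (1 / (4 * dt) * h ^ d * (\<Sum>e\<in>edges d N. \<Sum>i=1..n. \<Sum>j=1..n. b i j * rh i e * rh j e * (2 * (w i e - w j e) * (\<psi> i e - \<psi> j e)))
      + h ^ d * (\<Sum>l\<in>cells d N. \<Sum>i=1..n. \<sigma> i l * (ln (\<rho> i l) + 1)))) (at 0)"
  unfolding Jfun_def
  apply (intro DERIV_add DERIV_cmult DERIV_sum)
  subgoal for e i j using deriv_quad[of 1 "w i e" "\<psi> i e" "w j e" "\<psi> j e"] by simp
  subgoal for l i using deriv_ent[of "\<rho> i l" "\<sigma> i l"] pos by simp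
  done


lemma foc:
  assumes K: "(\<rho>1, w) \<in> Kset d N n h \<delta> rho0" and gt: "\<forall>i\<in>{1..n}. \<forall>l\<in>cells d N. \<rho>1 i l > \<delta>"
    and \<delta>0: "\<delta> \<ge> 0"
    and min: "\<forall>(\<rho>, w') \<in> Kset d N n h \<delta> rho0. Jfun d N n h dt b rho0 \<rho>1 w \<le> Jfun d N n h dt b rho0 \<rho> w'"
    and e0: "e0 \<in> edges d N" and i: "i \<in> {1..n}" and k: "k \<in> {1..n}" and ik: "i \<noteq> k"
  shows "gw w i e0 / dt + DL \<rho>1 i e0 = gw w k e0 / dt + DL \<rho>1 k e0"
proof -
  define \<psi> where "\<psi> = (\<lambda>j e. if e = e0 then (if j = i then 1 / rh i e0 else 0) - (if j = k then 1 / rh k e0 else 0) else 0)"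
  define \<sigma> where "\<sigma> = (\<lambda>j l. - dh d N h (\<lambda>e. rh j e * \<psi> j e) l)"
  have ri: "rh i e0 > 0" and rk: "rh k e0 > 0" using rh_pos i k e0 by auto
  have psi_sum: "(\<Sum>a=1..n. \<psi> a e * F a) = (if e = e0 then F i / rh i e0 - F k / rh k e0 else 0)" for e F
  proof (cases "e = e0")
    case True
    have "(\<Sum>a=1..n. \<psi> a e * F a) = (\<Sum>a=1..n. (if a = i then F i / rh i e0 else 0) - (if a = k then F k / rh k e0 else 0))"
      by (intro sum.cong refl) (auto simp: \<psi>_def True)
    also have "\<dots> = F i / rh i e0 - F k / rh k e0"
      using i k by (simp add: sum_subtractf)
    finally show ?thesis using True by simp
  qed (simp add: \<psi>_def)
  have rhpsi: "(\<Sum>j=1..n. rh j e * \<psi> j e) = 0" for e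
    using psi_sum[of e "\<lambda>j. rh j e"] ri rk by (cases "e = e0") (simp_all add: mult.commute)
  have sumsig: "(\<Sum>j=1..n. \<sigma> j l) = 0" for l
    unfolding \<sigma>_def sum_negf dh_sum[symmetric] rhpsi dh_zero by simp
  have Kw: "\<And>i l. i \<in> {1..n} \<Longrightarrow> l \<in> cells d N \<Longrightarrow> \<rho>1 i l - rho0 i l + dh d N h (\<lambda>e. rh i e * w i e) l = 0"
    "\<And>l. l \<in> cells d N \<Longrightarrow> (\<Sum>i=1..n. \<rho>1 i l) = 1"
    "\<And>e. e \<in> edges d N \<Longrightarrow> (\<Sum>i=1..n. rh i e * w i e) = 0"
    using K unfolding Kset_iff by auto
  have memb: "(\<lambda>j l. \<rho>1 j l + t * \<sigma> j l, \<lambda>j e. w j e + t * \<psi> j e) \<in> Kset d N n h \<delta> rho0"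
    if lbt: "\<forall>j\<in>{1..n}. \<forall>l\<in>cells d N. \<delta> \<le> \<rho>1 j l + t * \<sigma> j l" for t
  proof -
    have A: "\<rho>1 j l + t * \<sigma> j l - rho0 j l + dh d N h (\<lambda>e. rh j e * (w j e + t * \<psi> j e)) l = 0"
      if "j \<in> {1..n}" "l \<in> cells d N" for j l
    proof -
      have "(\<lambda>e. rh j e * (w j e + t * \<psi> j e)) = (\<lambda>e. 1 * (rh j e * w j e) + t * (rh j e * \<psi> j e))"
        by (intro ext) (simp add: algebra_simps)
      then have "dh d N h (\<lambda>e. rh j e * (w j e + t * \<psi> j e)) l = dh d N h (\<lambda>e. 1 * (rh j e * w j e) + t * (rh j e * \<psi> j e)) l"
        by (simp only:)
      also have "\<dots> = dh d N h (\<lambda>e. rh j e * w j e) l + t * dh d N h (\<lambda>e. rh j e * \<psi> j e) l"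
        using dh_lin[of d N h 1 "\<lambda>e. rh j e * w j e" t "\<lambda>e. rh j e * \<psi> j e" l] by simp
      finally have "dh d N h (\<lambda>e. rh j e * (w j e + t * \<psi> j e)) l = dh d N h (\<lambda>e. rh j e * w j e) l + t * dh d N h (\<lambda>e. rh j e * \<psi> j e) l" .
      then show ?thesis using Kw(1)[OF that] unfolding \<sigma>_def by simp
    qed
    have B: "(\<Sum>j=1..n. \<rho>1 j l + t * \<sigma> j l) = 1" if "l \<in> cells d N" for l
      using Kw(2)[OF that] sumsig[of l] by (simp add: sum.distrib sum_distrib_left[symmetric])
    have C: "(\<Sum>j=1..n. rh j e * (w j e + t * \<psi> j e)) = 0" if "e \<in> edges d N" for e
    proof -
      have "(\<Sum>j=1..n. rh j e * (w j e + t * \<psi> j e)) = (\<Sum>j=1..n. rh j e * w j e) + t * (\<Sum>j=1..n. rh j e * \<psi> j e)"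
        by (simp add: sum.distrib sum_distrib_left algebra_simps)
      then show ?thesis using Kw(3)[OF that] rhpsi[of e] by simp
    qed
    show ?thesis unfolding Kset_iff using A B C lbt by auto
  qed
  define f where "f = (\<lambda>t. Jfun d N n h dt b rho0 (\<lambda>j l. \<rho>1 j l + t * \<sigma> j l) (\<lambda>j e. w j e + t * \<psi> j e))"
  have f0: "f 0 = Jfun d N n h dt b rho0 \<rho>1 w" unfolding f_def by simp
  have ev: "eventually (\<lambda>t. \<forall>x\<in>{1..n} \<times> cells d N. \<delta> < \<rho>1 (fst x) (snd x) + t * \<sigma> (fst x) (snd x)) (at (0::real))"
  proof (rule eventually_ball_finite)
    show "finite ({1..n} \<times> cells d N)" using finite_cells by simp
    show "\<forall>x\<in>{1..n} \<times> cells d N. eventually (\<lambda>t. \<delta> < \<rho>1 (fst x) (snd x) + t * \<sigma> (fst x) (snd x)) (at 0)"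
    proof
      fix x assume x: "x \<in> {1..n} \<times> cells d N"
      have "((\<lambda>t. \<rho>1 (fst x) (snd x) + t * \<sigma> (fst x) (snd x)) \<longlongrightarrow> \<rho>1 (fst x) (snd x) + 0 * \<sigma> (fst x) (snd x)) (at 0)"
        by (intro tendsto_intros)
      moreover have "\<delta> < \<rho>1 (fst x) (snd x) + 0 * \<sigma> (fst x) (snd x)" using gt x by auto
      ultimately show "eventually (\<lambda>t. \<delta> < \<rho>1 (fst x) (snd x) + t * \<sigma> (fst x) (snd x)) (at 0)"
        by (rule order_tendstoD(1))
    qed
  qed
  then obtain r where r: "r > 0" and rP: "\<And>y. y \<noteq> 0 \<Longrightarrow> dist y 0 < r \<Longrightarrow>
      \<forall>x\<in>{1..n} \<times> cells d N. \<delta> < \<rho>1 (fst x) (snd x) + y * \<sigma> (fst x) (snd x)"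
    unfolding eventually_at by blast
  have loc: "\<forall>y. \<bar>0 - y\<bar> < r \<longrightarrow> f 0 \<le> f y"
  proof (intro allI impI)
    fix y :: real assume y: "\<bar>0 - y\<bar> < r"
    show "f 0 \<le> f y"
    proof (cases "y = 0")
      case False
      then have "\<forall>x\<in>{1..n} \<times> cells d N. \<delta> < \<rho>1 (fst x) (snd x) + y * \<sigma> (fst x) (snd x)"
        using rP y by (simp add: dist_real_def)
      then have "\<forall>j\<in>{1..n}. \<forall>l\<in>cells d N. \<delta> \<le> \<rho>1 j l + y * \<sigma> j l" by force
      then have "(\<lambda>j l. \<rho>1 j l + y * \<sigma> j l, \<lambda>j e. w j e + y * \<psi> j e) \<in> Kset d N n h \<delta> rho0" by (rule memb)
      then have "Jfun d N n h dt b rho0 \<rho>1 w \<le> f y" using min unfolding f_def by fast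
      then show ?thesis using f0 by simp
    qed simp
  qed
  have pos: "\<forall>i\<in>{1..n}. \<forall>l\<in>cells d N. \<rho>1 i l > 0" using gt \<delta>0 by force
  define D where "D = 1 / (4 * dt) * h ^ d * (\<Sum>e\<in>edges d N. \<Sum>i=1..n. \<Sum>j=1..n. b i j * rh i e * rh j e * (2 * (w i e - w j e) * (\<psi> i e - \<psi> j e)))
      + h ^ d * (\<Sum>l\<in>cells d N. \<Sum>i=1..n. \<sigma> i l * (ln (\<rho>1 i l) + 1))"
  have "(f has_real_derivative D) (at 0)" unfolding f_def D_def by (rule J_deriv[OF pos])
  then have D0: "D = 0" using r loc by (rule DERIV_local_min)
  have Q: "(\<Sum>e\<in>edges d N. \<Sum>i=1..n. \<Sum>j=1..n. b i j * rh i e * rh j e * (2 * (w i e - w j e) * (\<psi> i e - \<psi> j e)))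
      = 4 * (gw w i e0 - gw w k e0)"
  proof -
    have "(\<Sum>e\<in>edges d N. \<Sum>i=1..n. \<Sum>j=1..n. b i j * rh i e * rh j e * (2 * (w i e - w j e) * (\<psi> i e - \<psi> j e)))
       = (\<Sum>e\<in>edges d N. 2 * (\<Sum>i=1..n. \<Sum>j=1..n. b i j * rh i e * rh j e * (w i e - w j e) * (\<psi> i e - \<psi> j e)))"
      by (simp add: sum_distrib_left algebra_simps)
    also have "\<dots> = (\<Sum>e\<in>edges d N. 2 * (2 * (\<Sum>a=1..n. \<psi> a e * (rh a e * gw w a e))))"
    proof (intro sum.cong refl)
      fix e
      show "2 * (\<Sum>i=1..n. \<Sum>j=1..n. b i j * rh i e * rh j e * (w i e - w j e) * (\<psi> i e - \<psi> j e)) = 2 * (2 * (\<Sum>a=1..n. \<psi> a e * (rh a e * gw w a e)))"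
        using quad_lin[where w=w and e=e and p="\<lambda>a. \<psi> a e"] by simp
    qed
    also have "\<dots> = (\<Sum>e\<in>edges d N. (if e = e0 then 4 * (gw w i e0 - gw w k e0) else 0))"
    proof (intro sum.cong refl)
      fix e
      show "2 * (2 * (\<Sum>a=1..n. \<psi> a e * (rh a e * gw w a e))) = (if e = e0 then 4 * (gw w i e0 - gw w k e0) else 0)"
        using psi_sum[of e "\<lambda>a. rh a e * gw w a e"] ri rk by (cases "e = e0") simp_all
    qed
    also have "\<dots> = 4 * (gw w i e0 - gw w k e0)" using e0 finite_edges by simp
    finally show ?thesis .
  qed
  have E: "(\<Sum>l\<in>cells d N. \<Sum>i=1..n. \<sigma> i l * (ln (\<rho>1 i l) + 1)) = DL \<rho>1 i e0 - DL \<rho>1 k e0"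
  proof -
    have "(\<Sum>l\<in>cells d N. \<Sum>i=1..n. \<sigma> i l * (ln (\<rho>1 i l) + 1))
        = (\<Sum>l\<in>cells d N. \<Sum>j=1..n. ln (\<rho>1 j l) * \<sigma> j l) + (\<Sum>l\<in>cells d N. \<Sum>j=1..n. \<sigma> j l)"
      by (simp add: sum.distrib[symmetric] algebra_simps)
    also have "(\<Sum>l\<in>cells d N. \<Sum>j=1..n. \<sigma> j l) = 0" using sumsig by simp
    also have "(\<Sum>l\<in>cells d N. \<Sum>j=1..n. ln (\<rho>1 j l) * \<sigma> j l) = (\<Sum>j=1..n. \<Sum>l\<in>cells d N. ln (\<rho>1 j l) * \<sigma> j l)"
      by (rule sum.swap)
    also have "\<dots> = (\<Sum>j=1..n. \<Sum>e\<in>edges d N. \<psi> j e * (rh j e * DL \<rho>1 j e))"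
    proof (intro sum.cong refl)
      fix j
      have "(\<Sum>l\<in>cells d N. ln (\<rho>1 j l) * \<sigma> j l) = - (\<Sum>l\<in>cells d N. ln (\<rho>1 j l) * dh d N h (\<lambda>e. rh j e * \<psi> j e) l)"
        unfolding \<sigma>_def by (simp add: sum_negf)
      also have "\<dots> = (\<Sum>e\<in>edges d N. \<psi> j e * (rh j e * DL \<rho>1 j e))"
        unfolding sbp[OF N1] DL_def by (simp add: algebra_simps)
      finally show "(\<Sum>l\<in>cells d N. ln (\<rho>1 j l) * \<sigma> j l) = (\<Sum>e\<in>edges d N. \<psi> j e * (rh j e * DL \<rho>1 j e))" .
    qed
    also have "\<dots> = (\<Sum>e\<in>edges d N. \<Sum>j=1..n. \<psi> j e * (rh j e * DL \<rho>1 j e))" by (rule sum.swap)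
    also have "\<dots> = (\<Sum>e\<in>edges d N. (if e = e0 then DL \<rho>1 i e0 - DL \<rho>1 k e0 else 0))"
    proof (intro sum.cong refl)
      fix e
      show "(\<Sum>j=1..n. \<psi> j e * (rh j e * DL \<rho>1 j e)) = (if e = e0 then DL \<rho>1 i e0 - DL \<rho>1 k e0 else 0)"
        using psi_sum[of e "\<lambda>j. rh j e * DL \<rho>1 j e"] ri rk by (cases "e = e0") simp_all
    qed
    also have "\<dots> = DL \<rho>1 i e0 - DL \<rho>1 k e0" using e0 finite_edges by simp
    finally show ?thesis by simp
  qed
  have hd: "h ^ d > 0" using hpos by simp
  have "h ^ d * ((gw w i e0 - gw w k e0) / dt + (DL \<rho>1 i e0 - DL \<rho>1 k e0)) = D"
    unfolding D_def Q E using dtpos by (simp add: field_simps)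
  then have "(gw w i e0 - gw w k e0) / dt + (DL \<rho>1 i e0 - DL \<rho>1 k e0) = 0" using D0 hd hpos by (simp add: mult_eq_0_iff)
  moreover have "(gw w i e0 - gw w k e0) / dt = gw w i e0 / dt - gw w k e0 / dt" by (rule diff_divide_distrib)
  ultimately show ?thesis by linarith
qed


lemma nec:
  assumes K: "(\<rho>1, w) \<in> Kset d N n h \<delta> rho0" and gt: "\<forall>i\<in>{1..n}. \<forall>l\<in>cells d N. \<rho>1 i l > \<delta>"
    and \<delta>0: "\<delta> \<ge> 0"
    and min: "\<forall>(\<rho>, w') \<in> Kset d N n h \<delta> rho0. Jfun d N n h dt b rho0 \<rho>1 w \<le> Jfun d N n h dt b rho0 \<rho> w'"
  shows "scheme_eqs \<rho>1 (\<lambda>i e. w i e / dt)"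
proof -
  have Kw: "\<And>i l. i \<in> {1..n} \<Longrightarrow> l \<in> cells d N \<Longrightarrow> \<rho>1 i l - rho0 i l + dh d N h (\<lambda>e. rh i e * w i e) l = 0"
    "\<And>l. l \<in> cells d N \<Longrightarrow> (\<Sum>i=1..n. \<rho>1 i l) = 1"
    "\<And>e. e \<in> edges d N \<Longrightarrow> (\<Sum>i=1..n. rh i e * w i e) = 0"
    using K unfolding Kset_iff by auto
  have one: "1 \<in> {1..n}" using n1 by simp
  have eq1: "(\<rho>1 i l - rho0 i l) / dt + dh d N h (\<lambda>e. rh i e * (w i e / dt)) l = 0"
    if "i \<in> {1..n}" "l \<in> cells d N" for i l
  proof -
    have "(\<lambda>e. rh i e * (w i e / dt)) = (\<lambda>e. (1 / dt) * (rh i e * w i e))" by (intro ext) simp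
    then have "dh d N h (\<lambda>e. rh i e * (w i e / dt)) l = (1 / dt) * dh d N h (\<lambda>e. rh i e * w i e) l"
      using dh_scale[of d N h "1 / dt" "\<lambda>e. rh i e * w i e" l] by (simp only:)
    also have "dh d N h (\<lambda>e. rh i e * w i e) l = rho0 i l - \<rho>1 i l" using Kw(1)[OF that] by simp
    finally show ?thesis using dtpos by (simp add: field_simps)
  qed
  have eq3: "(\<Sum>j=1..n. rh j e * (w j e / dt)) = 0" if "e \<in> edges d N" for e
  proof -
    have "(\<Sum>j=1..n. rh j e * (w j e / dt)) = (\<Sum>j=1..n. rh j e * w j e) / dt"
      by (simp add: sum_divide_distrib)
    then show ?thesis using Kw(3)[OF that] by simp
  qed
  have eq2: "- (\<Sum>j=1..n. b i j * rh j e * (w i e / dt - w j e / dt))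
            = Dh N h (\<lambda>l. ln (\<rho>1 i l)) e
              - (\<Sum>j=1..n. rh j e * Dh N h (\<lambda>l. ln (\<rho>1 j l)) e)
                / (\<Sum>j=1..n. rh j e)"
    if i: "i \<in> {1..n}" and e: "e \<in> edges d N" for i e
  proof -
    define c0 where "c0 = gw w 1 e / dt + DL \<rho>1 1 e"
    have gj: "gw w j e / dt = c0 - DL \<rho>1 j e" if j: "j \<in> {1..n}" for j
    proof (cases "j = 1")
      case True then show ?thesis unfolding c0_def by simp
    next
      case False
      have "gw w j e / dt + DL \<rho>1 j e = gw w 1 e / dt + DL \<rho>1 1 e"
        by (rule foc[OF K gt \<delta>0 min e j one False])
      then show ?thesis unfolding c0_def by simp
    qed
    have T: "(\<Sum>j=1..n. rh j e) > 0"
      by (rule sum_pos) (use n1 rh_pos e in auto)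
    have "(\<Sum>j=1..n. rh j e * (gw w j e / dt)) = (\<Sum>j=1..n. rh j e * gw w j e) / dt"
      by (simp add: sum_divide_distrib)
    also have "\<dots> = 0" using sum_rh_gw[of e w] by simp
    finally have "(\<Sum>j=1..n. rh j e * (gw w j e / dt)) = 0" .
    moreover have "(\<Sum>j=1..n. rh j e * (gw w j e / dt)) = c0 * (\<Sum>j=1..n. rh j e) - (\<Sum>j=1..n. rh j e * DL \<rho>1 j e)"
    proof -
      have "(\<Sum>j=1..n. rh j e * (gw w j e / dt)) = (\<Sum>j=1..n. c0 * rh j e - rh j e * DL \<rho>1 j e)"
        by (intro sum.cong refl) (simp add: gj algebra_simps)
      then show ?thesis by (simp add: sum_subtractf sum_distrib_left)
    qed
    ultimately have "c0 = (\<Sum>j=1..n. rh j e * DL \<rho>1 j e) / (\<Sum>j=1..n. rh j e)"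
      using T by (simp add: field_simps)
    moreover have "(\<Sum>j=1..n. b i j * rh j e * (w i e / dt - w j e / dt)) = gw w i e / dt"
      unfolding gw_def by (simp add: sum_divide_distrib diff_divide_distrib[symmetric])
    ultimately show ?thesis using gj[OF i] unfolding DL_def by simp
  qed
  show ?thesis unfolding scheme_eqs_def using eq1 eq2 eq3 by blast
qed

lemma Kset_mono: "\<delta>' \<le> \<delta> \<Longrightarrow> Kset d N n h \<delta> rho0 \<subseteq> Kset d N n h \<delta>' rho0"
  unfolding Kset_def by force

end

theorem theoremA1:
  fixes d N n :: nat and L h dt :: real
    and b :: "nat \<Rightarrow> nat \<Rightarrow> real"
    and rho0 :: "nat \<Rightarrow> cell \<Rightarrow> real"
  assumes "d \<ge> 1" and "n \<ge> 2" and "N \<ge> 1" and "L > 0" and "h = L / real N" and "dt > 0"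
    and "\<And>i j. i \<in> {1..n} \<Longrightarrow> j \<in> {1..n} \<Longrightarrow> i \<noteq> j \<Longrightarrow> b i j > 0 \<and> b i j = b j i"
    and "\<And>i l. i \<in> {1..n} \<Longrightarrow> l \<in> cells d N \<Longrightarrow> rho0 i l > 0"
    and "\<And>l. l \<in> cells d N \<Longrightarrow> (\<Sum>i=1..n. rho0 i l) = 1"
  shows "\<exists>\<delta>0>0. \<forall>\<delta>. 0 < \<delta> \<and> \<delta> \<le> \<delta>0 \<longrightarrow>
           (\<forall>rho1 :: nat \<Rightarrow> cell \<Rightarrow> real.
              (\<forall>i\<in>{1..n}. \<forall>l\<in>cells d N. rho1 i l > 0) \<longrightarrow>
              (is_scheme_solution d N n h dt b rho0 rho1 \<longleftrightarrow>
               is_min_rho_component d N n h dt b \<delta> rho0 rho1))"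
proof -
  have hpos: "h > 0" using assms(3,4,5) by simp
  interpret grid d N n h dt b rho0
    by unfold_locales (use assms hpos in auto)
  define P where "P = {1..n} \<times> cells d N"
  have Pfin: "finite P" unfolding P_def using finite_cells by simp
  have Pne: "(1, (\<lambda>_. 0)) \<in> P" unfolding P_def using n1 zero_cell by simp
  define m0 where "m0 = Min ((\<lambda>x. rho0 (fst x) (snd x)) ` P)"
  have m0le: "\<forall>i\<in>{1..n}. \<forall>l\<in>cells d N. m0 \<le> rho0 i l"
  proof (intro ballI)
    fix i l assume "i \<in> {1..n}" "l \<in> cells d N"
    then have "(i, l) \<in> P" unfolding P_def by simp
    then have "rho0 i l \<in> (\<lambda>x. rho0 (fst x) (snd x)) ` P" by force
    then show "m0 \<le> rho0 i l" unfolding m0_def using Pfin by (intro Min_le) auto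
  qed
  have m0pos: "m0 > 0"
  proof -
    have "m0 \<in> (\<lambda>x. rho0 (fst x) (snd x)) ` P" unfolding m0_def using Pfin Pne
      by (intro Min_in) auto
    then obtain x where "x \<in> P" "m0 = rho0 (fst x) (snd x)" by blast
    then show ?thesis using r0pos unfolding P_def by auto
  qed
  define C where "C = real n * real (card (cells d N))"
  define M where "M = 1 - ln m0"
  define K where "K = - (2 * C * M / m0) - 2"
  define \<delta>0 where "\<delta>0 = min (m0 / 2) (exp K / 2)"
  have d0pos: "\<delta>0 > 0" unfolding \<delta>0_def using m0pos by simp
  have d0m: "\<delta>0 \<le> m0 / 2" unfolding \<delta>0_def by simp
  have d0ln: "ln (2 * \<delta>0) + 1 \<le> - (2 * C * M / m0) - 1"
  proof -
    have "2 * \<delta>0 \<le> exp K" unfolding \<delta>0_def by simp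
    then have "ln (2 * \<delta>0) \<le> ln (exp K)" using d0pos by (subst ln_le_cancel_iff) auto
    then show ?thesis unfolding K_def by simp
  qed
  have imp: "Jfun d N n h dt b rho0 (\<lambda>i l. (1 - \<delta>0) * \<rho> i l + \<delta>0 * rho0 i l) (\<lambda>i e. (1 - \<delta>0) * w i e)
       < Jfun d N n h dt b rho0 \<rho> w"
    if "(\<rho>, w) \<in> Kset d N n h 0 rho0" "\<forall>i\<in>{1..n}. \<forall>l\<in>cells d N. \<rho> i l > 0"
       "i0 \<in> {1..n}" "l0 \<in> cells d N" "\<rho> i0 l0 \<le> \<delta>0" for \<rho> w i0 l0
    by (rule improve[OF m0pos m0le d0pos d0m d0ln C_def M_def that])
  have m01: "m0 \<le> 1"
  proof -
    have "m0 \<le> rho0 1 (\<lambda>_. 0)" using m0le n1 zero_cell by simp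
    moreover have "rho0 1 (\<lambda>_. 0) \<le> 1" using r0_le1 n1 zero_cell by simp
    ultimately show ?thesis by linarith
  qed
  have d01: "\<delta>0 \<le> 1" using d0m m01 by linarith
  have r0d: "\<forall>i\<in>{1..n}. \<forall>l\<in>cells d N. \<delta>' \<le> rho0 i l" if "\<delta>' \<le> \<delta>0" for \<delta>'
  proof (intro ballI)
    fix i l assume "i \<in> {1..n}" "l \<in> cells d N"
    then have "m0 \<le> rho0 i l" using m0le by blast
    then show "\<delta>' \<le> rho0 i l" using that d0m m0pos by linarith
  qed
  show ?thesis
  proof (intro exI[of _ \<delta>0] conjI allI impI d0pos)
    fix \<delta> :: real and rho1 :: "nat \<Rightarrow> cell \<Rightarrow> real"
    assume \<delta>: "0 < \<delta> \<and> \<delta> \<le> \<delta>0" and pos: "\<forall>i\<in>{1..n}. \<forall>l\<in>cells d N. rho1 i l > 0"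
    show "is_scheme_solution d N n h dt b rho0 rho1 \<longleftrightarrow> is_min_rho_component d N n h dt b \<delta> rho0 rho1"
    proof
      assume "is_scheme_solution d N n h dt b rho0 rho1"
      then obtain v where sch: "scheme_eqs rho1 v" unfolding scheme_iff by blast
      have K0: "(rho1, \<lambda>i e. dt * v i e) \<in> Kset d N n h 0 rho0"
        by (rule suff_K[OF sch]) (use pos in \<open>auto intro: less_imp_le\<close>)
      have big: "\<forall>i\<in>{1..n}. \<forall>l\<in>cells d N. rho1 i l > \<delta>0"
      proof (rule ccontr)
        assume "\<not> ?thesis"
        then obtain i0 l0 where il: "i0 \<in> {1..n}" "l0 \<in> cells d N" "rho1 i0 l0 \<le> \<delta>0" by force
        have lt: "Jfun d N n h dt b rho0 (\<lambda>i l. (1 - \<delta>0) * rho1 i l + \<delta>0 * rho0 i l) (\<lambda>i e. (1 - \<delta>0) * (dt * v i e))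
            < Jfun d N n h dt b rho0 rho1 (\<lambda>i e. dt * v i e)"
          by (rule imp[OF K0 pos il])
        have "(\<lambda>i l. (1 - \<delta>0) * rho1 i l + \<delta>0 * rho0 i l, \<lambda>i e. (1 - \<delta>0) * (dt * v i e)) \<in> Kset d N n h 0 rho0"
          by (rule Kset_comb[OF K0]) (use d0pos d01 r0pos in \<open>auto intro: less_imp_le\<close>)
        then have "Jfun d N n h dt b rho0 rho1 (\<lambda>i e. dt * v i e)
            \<le> Jfun d N n h dt b rho0 (\<lambda>i l. (1 - \<delta>0) * rho1 i l + \<delta>0 * rho0 i l) (\<lambda>i e. (1 - \<delta>0) * (dt * v i e))"
          by (rule suff_min[OF sch pos])
        with lt show False by simp
      qed
      have Kd: "(rho1, \<lambda>i e. dt * v i e) \<in> Kset d N n h \<delta> rho0"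
        by (rule suff_K[OF sch]) (use big \<delta> in force)
      show "is_min_rho_component d N n h dt b \<delta> rho0 rho1"
        unfolding is_min_rho_component_def
      proof (intro exI conjI)
        show "(rho1, \<lambda>i e. dt * v i e) \<in> Kset d N n h \<delta> rho0" by (rule Kd)
        show "\<forall>(\<rho>, w') \<in> Kset d N n h \<delta> rho0. Jfun d N n h dt b rho0 rho1 (\<lambda>i e. dt * v i e) \<le> Jfun d N n h dt b rho0 \<rho> w'"
        proof (intro ballI, clarify)
          fix \<rho> w' assume "(\<rho>, w') \<in> Kset d N n h \<delta> rho0"
          then have "(\<rho>, w') \<in> Kset d N n h 0 rho0" using Kset_mono[of 0 \<delta>] \<delta> by auto
          then show "Jfun d N n h dt b rho0 rho1 (\<lambda>i e. dt * v i e) \<le> Jfun d N n h dt b rho0 \<rho> w'"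
            by (rule suff_min[OF sch pos])
        qed
      qed
    next
      assume "is_min_rho_component d N n h dt b \<delta> rho0 rho1"
      then obtain w where Kd: "(rho1, w) \<in> Kset d N n h \<delta> rho0"
        and min: "\<forall>(\<rho>, w') \<in> Kset d N n h \<delta> rho0. Jfun d N n h dt b rho0 rho1 w \<le> Jfun d N n h dt b rho0 \<rho> w'"
        unfolding is_min_rho_component_def by blast
      have K0: "(rho1, w) \<in> Kset d N n h 0 rho0" using Kset_mono[of 0 \<delta>] \<delta> Kd by auto
      have big: "\<forall>i\<in>{1..n}. \<forall>l\<in>cells d N. rho1 i l > \<delta>0"
      proof (rule ccontr)
        assume "\<not> ?thesis"
        then obtain i0 l0 where il: "i0 \<in> {1..n}" "l0 \<in> cells d N" "rho1 i0 l0 \<le> \<delta>0" by force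
        have lt: "Jfun d N n h dt b rho0 (\<lambda>i l. (1 - \<delta>0) * rho1 i l + \<delta>0 * rho0 i l) (\<lambda>i e. (1 - \<delta>0) * w i e)
            < Jfun d N n h dt b rho0 rho1 w"
          by (rule imp[OF K0 pos il])
        have "(\<lambda>i l. (1 - \<delta>0) * rho1 i l + \<delta>0 * rho0 i l, \<lambda>i e. (1 - \<delta>0) * w i e) \<in> Kset d N n h \<delta> rho0"
          by (rule Kset_comb[OF Kd]) (use d0pos d01 r0d \<delta> in auto)
        then have "Jfun d N n h dt b rho0 rho1 w
            \<le> Jfun d N n h dt b rho0 (\<lambda>i l. (1 - \<delta>0) * rho1 i l + \<delta>0 * rho0 i l) (\<lambda>i e. (1 - \<delta>0) * w i e)"
          using min by fast
        with lt show False by simp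
      qed
      have gt: "\<forall>i\<in>{1..n}. \<forall>l\<in>cells d N. rho1 i l > \<delta>" using big \<delta> by force
      have "scheme_eqs rho1 (\<lambda>i e. w i e / dt)"
        by (rule nec[OF Kd gt _ min]) (use \<delta> in simp)
      then show "is_scheme_solution d N n h dt b rho0 rho1" unfolding scheme_iff by blast
    qed
  qed
qed

end
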